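(* Let $\mathcal{X},\mathcal{Y}$ be finite sets and $P$ a joint probability mass function on $\mathcal{X}\times\mathcal{Y}$ with $P(x,y)>0$ for all $(x,y)$. For every conditional guessing function $G(\cdot|\cdot)$, every $\rho>0$ and every $q\in\mathbb{R}$, $$ E_q[G(X|Y)^\rho]\;\geq\;(1+\ln|\mathcal{X}|)^{-\rho}\,\frac{\sum_{y\in\mathcal{Y}}\left[\sum_{x\in\mathcal{X}}P(x,y)^{\frac{q}{1+\rho}}\right]^{1+\rho}}{\sum_{y\in\mathcal{Y}}\sum_{x\in\mathcal{X}}P(x,y)^q}. $$
   Context: A conditional guessing function is a map $G(\cdot|\cdot)$ on $\mathcal{X}\times\mathcal{Y}$ such that for each $y\in\mathcal{Y}$, $x\mapsto G(x|y)$ is a bijection from $\mathcal{X}$ onto $\{1,\dots,|\mathcal{X}|\}$. For $q\in\mathbb{R}$ and a function $F$ on $\mathcal{X}\times\mathcal{Y}$, the $q$-normalized expectation under $P$ is $E_q[F(X,Y)]=\frac{\sum_{x,y}F(x,y)P(x,y)^q}{\sum_{x,y}P(x,y)^q}$. *)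

theory Defs
  imports "HOL-Analysis.Analysis"
begin

text \<open>A conditional guessing function on X \<times> Y: for each y in Y, x \<mapsto> G x y is a
  bijection from X onto {1,...,|X|}.  G x y stands for G(x|y).\<close>
definition cond_guessing_function :: "'a set \<Rightarrow> 'b set \<Rightarrow> ('a \<Rightarrow> 'b \<Rightarrow> nat) \<Rightarrow> bool" where
  "cond_guessing_function X Y G \<longleftrightarrow> (\<forall>y\<in>Y. bij_betw (\<lambda>x. G x y) X {1..card X})"

definition q_expectation :: "'a set \<Rightarrow> 'b set \<Rightarrow> ('a \<Rightarrow> 'b \<Rightarrow> real) \<Rightarrow> real \<Rightarrow> ('a \<Rightarrow> 'b \<Rightarrow> real) \<Rightarrow> real" where
  "q_expectation X Y P q F =
     (\<Sum>(x,y)\<in>X \<times> Y. F x y * P x y powr q) / (\<Sum>(x,y)\<in>X \<times> Y. P x y powr q)"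

end

theory Submission
  imports Defs
begin

lemma harm_le_ln1: "n > 0 \<Longrightarrow> (harm n :: real) \<le> 1 + ln (real n)"
  using euler_mascheroni_sequence_decreasing[of 1 n] by (simp add: harm_def)

lemma key:
  fixes X :: "'a set" and g :: "'a \<Rightarrow> nat" and a :: "'a \<Rightarrow> real" and \<rho> :: real
  assumes fin: "finite X" and ne: "X \<noteq> {}" and bij: "bij_betw g X {1..card X}"
    and apos: "\<And>x. x \<in> X \<Longrightarrow> a x > 0" and rho: "\<rho> > 0"
  shows "(\<Sum>x\<in>X. a x) powr (1+\<rho>) \<le> harm (card X) powr \<rho> * (\<Sum>x\<in>X. real (g x) powr \<rho> * a x powr (1+\<rho>))"
proof -
  define H :: real where "H = harm (card X)"
  have H: "H = (\<Sum>x\<in>X. 1 / real (g x))"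
    unfolding H_def harm_def using sum.reindex_bij_betw[OF bij, of "\<lambda>k. inverse (real k)"]
    by (simp add: divide_inverse)
  have Hpos: "H > 0" unfolding H_def using fin ne by (simp add: card_gt_0_iff)
  have gpos: "x \<in> X \<Longrightarrow> real (g x) > 0" for x
    using bij_betwE[OF bij] by fastforce
  define w where "w x = 1 / (real (g x) * H)" for x
  define z where "z x = a x * H * real (g x)" for x
  have sw: "(\<Sum>x\<in>X. w x) = 1"
  proof -
    have "(\<Sum>x\<in>X. w x) = (\<Sum>x\<in>X. (1 / real (g x)) / H)"
      unfolding w_def by simp
    also have "\<dots> = (\<Sum>x\<in>X. 1 / real (g x)) / H" by (rule sum_divide_distrib[symmetric])
    finally show ?thesis using Hpos H by simp
  qed
  have cv: "(\<Sum>x\<in>X. w x *\<^sub>R z x) powr (1+\<rho>) \<le> (\<Sum>x\<in>X. w x * z x powr (1+\<rho>))"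
    apply (rule convex_on_sum[OF fin ne powr_convex[of "1+\<rho>"] sw])
    using rho gpos Hpos apos by (auto simp: w_def z_def)
  have e1: "(\<Sum>x\<in>X. w x *\<^sub>R z x) = (\<Sum>x\<in>X. a x)"
    by (rule sum.cong) (use gpos Hpos in \<open>auto simp: w_def z_def\<close>)
  have e2: "w x * z x powr (1+\<rho>) = H powr \<rho> * (real (g x) powr \<rho> * a x powr (1+\<rho>))"
    if "x \<in> X" for x
  proof -
    have "z x powr (1+\<rho>) = a x powr (1+\<rho>) * H powr (1+\<rho>) * real (g x) powr (1+\<rho>)"
      unfolding z_def using apos[OF that] Hpos gpos[OF that] by (simp add: powr_mult)
    also have "\<dots> = a x powr (1+\<rho>) * (H * H powr \<rho>) * (real (g x) * real (g x) powr \<rho>)"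
      using Hpos gpos[OF that] by (simp add: powr_add)
    finally show ?thesis unfolding w_def using Hpos gpos[OF that] by (simp add: field_simps)
  qed
  have e3: "(\<Sum>x\<in>X. w x * z x powr (1+\<rho>)) = H powr \<rho> * (\<Sum>x\<in>X. real (g x) powr \<rho> * a x powr (1+\<rho>))"
    unfolding sum_distrib_left by (rule sum.cong[OF refl e2])
  show ?thesis using cv unfolding e1 e3 H_def .
qed

theorem theorem2:
  fixes X :: "'a set" and Y :: "'b set" and P :: "'a \<Rightarrow> 'b \<Rightarrow> real"
    and G :: "'a \<Rightarrow> 'b \<Rightarrow> nat" and \<rho> q :: real
  assumes "finite X" and "finite Y"
    and "\<forall>x\<in>X. \<forall>y\<in>Y. P x y > 0"
    and "(\<Sum>(x,y)\<in>X \<times> Y. P x y) = 1"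
    and "cond_guessing_function X Y G"
    and "\<rho> > 0"
  shows "q_expectation X Y P q (\<lambda>x y. real (G x y) powr \<rho>)
         \<ge> (1 + ln (real (card X))) powr (-\<rho>) *
           ((\<Sum>y\<in>Y. (\<Sum>x\<in>X. P x y powr (q / (1 + \<rho>))) powr (1 + \<rho>))
            / (\<Sum>y\<in>Y. \<Sum>x\<in>X. P x y powr q))"
proof -
  note fX = assms(1) and fY = assms(2) and Ppos = assms(3) and rho = assms(6)
  have XY: "X \<noteq> {}" "Y \<noteq> {}" using assms(4) by auto
  define L where "L = (1 + ln (real (card X))) powr (-\<rho>)"
  define D where "D = (\<Sum>y\<in>Y. \<Sum>x\<in>X. P x y powr q)"
  have Dpos: "D > 0" unfolding D_def
    by (rule sum_pos[OF fY XY(2)], rule sum_pos[OF fX XY(1)]) (use Ppos in fastforce)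
  have cX: "card X > 0" using fX XY by (simp add: card_gt_0_iff)
  have per: "L * (\<Sum>x\<in>X. P x y powr (q / (1 + \<rho>))) powr (1 + \<rho>)
      \<le> (\<Sum>x\<in>X. real (G x y) powr \<rho> * P x y powr q)" if y: "y \<in> Y" for y
  proof -
    have bij: "bij_betw (\<lambda>x. G x y) X {1..card X}"
      using assms(5) y unfolding cond_guessing_function_def by blast
    have k: "(\<Sum>x\<in>X. P x y powr (q / (1 + \<rho>))) powr (1+\<rho>) \<le> harm (card X) powr \<rho> *
       (\<Sum>x\<in>X. real (G x y) powr \<rho> * (P x y powr (q / (1 + \<rho>))) powr (1+\<rho>))"
      by (rule key[OF fX XY(1) bij _ rho]) (use Ppos y in fastforce)
    have pp: "(P x y powr (q / (1 + \<rho>))) powr (1+\<rho>) = P x y powr q" for x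
      using rho by (simp add: powr_powr)
    define S where "S = (\<Sum>x\<in>X. real (G x y) powr \<rho> * P x y powr q)"
    define A where "A = (\<Sum>x\<in>X. P x y powr (q / (1 + \<rho>))) powr (1+\<rho>)"
    have Hpos: "(harm (card X) :: real) > 0" using cX by simp
    have k2: "A \<le> harm (card X) powr \<rho> * S" using k unfolding pp A_def S_def .
    have "L \<le> harm (card X) powr (-\<rho>)" unfolding L_def
      by (rule powr_mono2') (use rho Hpos harm_le_ln1[OF cX] in auto)
    have A0: "A \<ge> 0" unfolding A_def by simp
    have "L * A \<le> harm (card X) powr (-\<rho>) * A"
      by (rule mult_right_mono) fact+
    also have "\<dots> \<le> harm (card X) powr (-\<rho>) * (harm (card X) powr \<rho> * S)"
      by (rule mult_left_mono[OF k2]) simp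
    also have "\<dots> = S" proof -
      have Hne: "harm (card X) \<noteq> (0::real)" using Hpos by linarith
      show ?thesis using Hne by (simp add: mult.assoc[symmetric] powr_add[symmetric] del: harm_pos_iff)
    qed
    finally show ?thesis unfolding A_def S_def .
  qed
  have num: "(\<Sum>(x,y)\<in>X \<times> Y. real (G x y) powr \<rho> * P x y powr q) =
      (\<Sum>y\<in>Y. \<Sum>x\<in>X. real (G x y) powr \<rho> * P x y powr q)"
    by (simp add: sum.cartesian_product[symmetric] sum.swap[of _ X Y])
  have den: "(\<Sum>(x,y)\<in>X \<times> Y. P x y powr q) = D"
    unfolding D_def by (simp add: sum.cartesian_product[symmetric] sum.swap[of _ X Y])
  have "L * (\<Sum>y\<in>Y. (\<Sum>x\<in>X. P x y powr (q / (1 + \<rho>))) powr (1 + \<rho>))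
        \<le> (\<Sum>y\<in>Y. \<Sum>x\<in>X. real (G x y) powr \<rho> * P x y powr q)"
    unfolding sum_distrib_left by (rule sum_mono) (rule per)
  hence "L * (\<Sum>y\<in>Y. (\<Sum>x\<in>X. P x y powr (q / (1 + \<rho>))) powr (1 + \<rho>)) / D
        \<le> (\<Sum>y\<in>Y. \<Sum>x\<in>X. real (G x y) powr \<rho> * P x y powr q) / D"
    using Dpos by (simp add: divide_right_mono)
  thus ?thesis unfolding q_expectation_def num den L_def[symmetric] D_def[symmetric]
    by simp
qed

end
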